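(* In the setting described in the context, let $\gamma\in 2\Delta^+$. If $S_\gamma>0$, then either the number of ordered pairs $(\alpha,\beta)\in\Delta^+\times\Delta^+$ with $\alpha+\beta=\gamma$ is greater than two, or there exist $\alpha,\beta\in\Delta^+$ with $\alpha+\beta=\gamma$ and $\langle\alpha,\beta\rangle<0$.
   Context: Let $K$ be a compact Lie group with Lie algebra $\mathfrak k$, and $V$ a complex irreducible representation of $K$ (an irreducible orthogonal representation with an invariant complex structure) with $K$-invariant Hermitian product; $\mathfrak g=\mathfrak k^{\mathbb C}$ acts on $V$. Fix a maximal torus with complexified Lie algebra $\mathfrak h$, roots $\Delta$, positive roots $\Delta^+$; $\langle\cdot,\cdot\rangle$ also denotes the Cartan–Killing form on $\mathfrak h^*$. Choose $f_\alpha\in\mathfrak g_{-\alpha}$, $e_\alpha\in\mathfrak g_\alpha$ ($\alpha\in\Delta^+$) with $[e_\alpha,f_\alpha]=h_\alpha$, $\langle h_\alpha,h\rangle=2\alpha(h)/\|\alpha\|^2$ for $h\in\mathfrak h$, and $e_\alpha-f_\alpha$, $i(e_\alpha+f_\alpha)$, $ih_\alpha$ spanning the semisimple part of $\mathfrak k$. Let $p$ be a unit highest weight vector of $V$, and let $f=\sum_{\alpha\in\Delta^+}z_\alpha f_\alpha$ ($z_\alpha\in\mathbb C$) with $\|fp\|=1$. Put $r_\alpha=|z_\alpha|\,\|f_\alpha p\|$. For $\alpha,\beta\in\Delta^+$ let $m_{\alpha,\beta}=\sqrt2$ if $\alpha=\beta$ or $\langle\alpha,\beta\rangle<0$, and $m_{\alpha,\beta}=1$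 otherwise. Let $2\Delta^+=\{\alpha+\beta:\alpha,\beta\in\Delta^+\}$, and for $\gamma\in2\Delta^+$ set \[S_\gamma=\Big(\sum_{\alpha+\beta=\gamma}m_{\alpha,\beta}r_\alpha r_\beta\Big)^2-2\sum_{\alpha+\beta=\gamma}r_\alpha^2r_\beta^2,\] where both sums run over ordered pairs $(\alpha,\beta)\in\Delta^+\times\Delta^+$ with $\alpha+\beta=\gamma$. *)

theory Defs
  imports "HOL-Analysis.Analysis"
begin

text \<open>Abstract root data. The real span of the roots in h* carries the (positive definite)
  Cartan--Killing form; we model it as a Euclidean space with its inner product.\<close>

definition root_system :: "'a::euclidean_space set \<Rightarrow> bool" where
  "root_system R \<longleftrightarrow> finite R \<and> 0 \<notin> R
     \<and> (\<forall>\<alpha>\<in>R. \<forall>\<beta>\<in>R. \<beta> - (2 * (\<beta> \<bullet> \<alpha>) / (\<alpha> \<bullet> \<alpha>)) *\<^sub>R \<alpha> \<in> R)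
     \<and> (\<forall>\<alpha>\<in>R. \<forall>\<beta>\<in>R. 2 * (\<beta> \<bullet> \<alpha>) / (\<alpha> \<bullet> \<alpha>) \<in> \<int>)
     \<and> (\<forall>\<alpha>\<in>R. \<forall>c. c *\<^sub>R \<alpha> \<in> R \<longrightarrow> c = 1 \<or> c = -1)"

definition positive_system :: "'a::euclidean_space set \<Rightarrow> 'a set \<Rightarrow> bool" where
  "positive_system R P \<longleftrightarrow> (\<exists>v. (\<forall>\<alpha>\<in>R. v \<bullet> \<alpha> \<noteq> 0) \<and> P = {\<alpha>\<in>R. v \<bullet> \<alpha> > 0})"

definition two_Delta :: "'a::euclidean_space set \<Rightarrow> 'a set" where
  "two_Delta P = {\<alpha> + \<beta> | \<alpha> \<beta>. \<alpha> \<in> P \<and> \<beta> \<in> P}"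

definition root_pairs :: "'a::euclidean_space set \<Rightarrow> 'a \<Rightarrow> ('a \<times> 'a) set" where
  "root_pairs P \<gamma> = {(\<alpha>, \<beta>). \<alpha> \<in> P \<and> \<beta> \<in> P \<and> \<alpha> + \<beta> = \<gamma>}"

definition mcoef :: "'a::euclidean_space \<Rightarrow> 'a \<Rightarrow> real" where
  "mcoef \<alpha> \<beta> = (if \<alpha> = \<beta> \<or> \<alpha> \<bullet> \<beta> < 0 then sqrt 2 else 1)"

definition S_gamma :: "'a::euclidean_space set \<Rightarrow> ('a \<Rightarrow> real) \<Rightarrow> 'a \<Rightarrow> real" where
  "S_gamma P r \<gamma> =
     (\<Sum>(\<alpha>, \<beta>)\<in>root_pairs P \<gamma>. mcoef \<alpha> \<beta> * r \<alpha> * r \<beta>)\<^sup>2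
     - 2 * (\<Sum>(\<alpha>, \<beta>)\<in>root_pairs P \<gamma>. (r \<alpha>)\<^sup>2 * (r \<beta>)\<^sup>2)"

end

theory Submission
  imports Defs
begin

theorem mainTheorem6:
  fixes R P :: "'a::euclidean_space set" and r :: "'a \<Rightarrow> real" and \<gamma> :: 'a
  assumes "root_system R" and "positive_system R P"
    and "\<forall>\<alpha>\<in>P. r \<alpha> \<ge> 0"
    and "\<gamma> \<in> two_Delta P"
    and "S_gamma P r \<gamma> > 0"
  shows "card (root_pairs P \<gamma>) > 2 \<or> (\<exists>\<alpha>\<in>P. \<exists>\<beta>\<in>P. \<alpha> + \<beta> = \<gamma> \<and> \<alpha> \<bullet> \<beta> < 0)"
proof (rule ccontr)
  assume H: "\<not> ?thesis"
  hence c2: "card (root_pairs P \<gamma>) \<le> 2" and nn: "\<And>a b. a \<in> P \<Longrightarrow> b \<in> P \<Longrightarrow> a + b = \<gamma> \<Longrightarrow> \<not> a \<bullet> b < 0"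
    by auto
  define A where "A = root_pairs P \<gamma>"
  have finP: "finite P" using assms(1,2) unfolding root_system_def positive_system_def by auto
  have finA: "finite A" unfolding A_def root_pairs_def
    by (rule finite_subset[of _ "P \<times> P"]) (use finP in auto)
  have sym: "(d, c) \<in> A" if "(c, d) \<in> A" for c d
    using that unfolding A_def root_pairs_def by (auto simp: add.commute)
  obtain a b where ab: "(a, b) \<in> A" using assms(4) unfolding two_Delta_def A_def root_pairs_def by auto
  have three: False if "x \<in> A" "y \<in> A" "z \<in> A" "x \<noteq> y" "x \<noteq> z" "y \<noteq> z" for x y z
  proof -
    have "card {x,y,z} \<le> card A" using that finA by (intro card_mono) auto
    moreover have "card {x,y,z} = 3" using that by auto
    ultimately show False using c2 A_def by simp
  qed
  have "S_gamma P r \<gamma> \<le> 0"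
  proof (cases "a = b")
    case True
    have "A = {(a, a)}"
    proof (intro equalityI subsetI)
      fix p assume p: "p \<in> A"
      obtain c d where pcd: "p = (c, d)" by (cases p)
      show "p \<in> {(a, a)}"
      proof (cases "c = d")
        case True
        have "c + c = a + a" using p ab \<open>a = b\<close> pcd True unfolding A_def root_pairs_def by auto
        hence "(2::real) *\<^sub>R c = 2 *\<^sub>R a" by (simp add: scaleR_2)
        hence "c = a" by simp
        thus ?thesis using pcd True by simp
      next
        case False
        have "(c,d) \<noteq> (a,a)" "(d,c) \<noteq> (a,a)" using False by auto
        thus ?thesis using three[of "(a,a)" "(c,d)" "(d,c)"] p pcd sym ab \<open>a = b\<close> False by auto
      qed
    qed (use ab True in auto)
    then show ?thesis
    proof -
      have "sqrt 2 * r a * r a * (sqrt 2 * r a * r a) = (sqrt 2 * sqrt 2) * (r a * r a * (r a * r a))"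
        by (simp add: algebra_simps)
      also have "\<dots> = 2 * (r a * r a * (r a * r a))" by simp
      finally have e: "sqrt 2 * r a * r a * (sqrt 2 * r a * r a) = 2 * (r a * r a * (r a * r a))" .
      show ?thesis unfolding S_gamma_def A_def[symmetric] using \<open>A = {(a, a)}\<close>
        by (simp add: mcoef_def power2_eq_square e)
    qed
  next
    case False
    have "A = {(a, b), (b, a)}"
    proof (intro equalityI subsetI)
      fix p assume p: "p \<in> A"
      show "p \<in> {(a, b), (b, a)}"
        using three[of "(a,b)" "(b,a)" p] p ab sym False by auto
    qed (use ab sym in auto)
    moreover have "a \<in> P" "b \<in> P" "a + b = \<gamma>" using ab unfolding A_def root_pairs_def by auto
    hence "\<not> a \<bullet> b < 0" "\<not> b \<bullet> a < 0" using nn by (auto simp: inner_commute)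
    hence "mcoef a b = 1" "mcoef b a = 1" using False by (auto simp: mcoef_def)
    ultimately show ?thesis unfolding S_gamma_def A_def[symmetric] using False
      by (simp add: power2_eq_square algebra_simps)
  qed
  thus False using assms(5) by simp
qed

end
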